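(* Let $X,Y,Z,S$ be discrete random variables taking values in finite sets $\mathcal X,\mathcal Y,\mathcal Z,\mathcal S$, and suppose $X$ is conditionally independent of $Z$ given $(Y,S)$. Then \[\nu_{X,Z|S}\le\frac{|\mathcal Y|}{|\mathcal Z|}\nu_{X,Y|S}.\]
   Context: For discrete random variables $A,B,S$ with finite ranges $\mathcal A,\mathcal B$, define $\nu_{A,B|S}:=\mathbb{E}_S\sum_{a\in\mathcal A}\frac{1}{|\mathcal A|}\sum_{b\in\mathcal B}\frac{1}{|\mathcal B|}\big|\mathbb{P}(A=a,B=b|S)-\mathbb{P}(A=a|S)\mathbb{P}(B=b|S)\big|$, where the outer expectation is over $S$ (values with positive probability). *)

theory Defs
  imports "HOL-Probability.Probability"
begin

text \<open>Discrete random variables are modelled as functions on the sample space of a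
  probability mass function p. Their value ranges are finite types; the range
  cardinality |A| is CARD of the type.\<close>

definition prb :: "'o pmf \<Rightarrow> ('o \<Rightarrow> bool) \<Rightarrow> real" where
  "prb p E = measure_pmf.prob p {\<omega>. E \<omega>}"

definition cprb :: "'o pmf \<Rightarrow> ('o \<Rightarrow> bool) \<Rightarrow> ('o \<Rightarrow> bool) \<Rightarrow> real" where
  "cprb p E C = prb p (\<lambda>\<omega>. E \<omega> \<and> C \<omega>) / prb p C"

definition nu :: "'o pmf \<Rightarrow> ('o \<Rightarrow> 'a::finite) \<Rightarrow> ('o \<Rightarrow> 'b::finite) \<Rightarrow> ('o \<Rightarrow> 's::finite) \<Rightarrow> real" where
  "nu p A B S =
     (\<Sum>s\<in>{s. prb p (\<lambda>\<omega>. S \<omega> = s) > 0}.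
        prb p (\<lambda>\<omega>. S \<omega> = s) *
        (\<Sum>a\<in>UNIV. (1 / real CARD('a)) *
          (\<Sum>b\<in>UNIV. (1 / real CARD('b)) *
             \<bar>cprb p (\<lambda>\<omega>. A \<omega> = a \<and> B \<omega> = b) (\<lambda>\<omega>. S \<omega> = s)
              - cprb p (\<lambda>\<omega>. A \<omega> = a) (\<lambda>\<omega>. S \<omega> = s) *
                cprb p (\<lambda>\<omega>. B \<omega> = b) (\<lambda>\<omega>. S \<omega> = s)\<bar>)))"

definition cond_indep :: "'o pmf \<Rightarrow> ('o \<Rightarrow> 'a) \<Rightarrow> ('o \<Rightarrow> 'c) \<Rightarrow> ('o \<Rightarrow> 'w) \<Rightarrow> bool" where
  "cond_indep p X Z W \<longleftrightarrow>
     (\<forall>w x z. prb p (\<lambda>\<omega>. W \<omega> = w) > 0 \<longrightarrow>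
        cprb p (\<lambda>\<omega>. X \<omega> = x \<and> Z \<omega> = z) (\<lambda>\<omega>. W \<omega> = w) =
        cprb p (\<lambda>\<omega>. X \<omega> = x) (\<lambda>\<omega>. W \<omega> = w) * cprb p (\<lambda>\<omega>. Z \<omega> = z) (\<lambda>\<omega>. W \<omega> = w))"

end

theory Submission
  imports Defs
begin

lemma prb_cong: "(\<And>\<omega>. E \<omega> = F \<omega>) \<Longrightarrow> prb p E = prb p F"
proof -
  assume "\<And>\<omega>. E \<omega> = F \<omega>"
  hence "E = F" by auto
  thus ?thesis by simp
qed

lemma prb_nonneg: "prb p E \<ge> 0"
  unfolding prb_def by simp

lemma prb_mono: "(\<And>\<omega>. E \<omega> \<Longrightarrow> F \<omega>) \<Longrightarrow> prb p E \<le> prb p F"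
  unfolding prb_def by (rule measure_pmf.finite_measure_mono) auto

lemma prb_sum:
  fixes Y :: "'o \<Rightarrow> 'y::finite"
  shows "prb p E = (\<Sum>y\<in>UNIV. prb p (\<lambda>\<omega>. E \<omega> \<and> Y \<omega> = y))"
proof -
  have "{\<omega>. E \<omega>} = (\<Union>y\<in>UNIV. {\<omega>. E \<omega> \<and> Y \<omega> = y})" by auto
  hence "measure_pmf.prob p {\<omega>. E \<omega>} = measure_pmf.prob p (\<Union>y\<in>UNIV. {\<omega>. E \<omega> \<and> Y \<omega> = y})"
    by simp
  also have "\<dots> = (\<Sum>y\<in>UNIV. measure_pmf.prob p {\<omega>. E \<omega> \<and> Y \<omega> = y})"
    by (rule measure_pmf.finite_measure_finite_Union) (auto simp: disjoint_family_on_def)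
  finally show ?thesis unfolding prb_def .
qed

lemma abstract_step:
  fixes pxz :: "'x \<Rightarrow> 'z::finite \<Rightarrow> real" and pxy :: "'x \<Rightarrow> 'y::finite \<Rightarrow> real"
  assumes q: "q > 0"
    and h1: "\<And>z. pxz x z = (\<Sum>y\<in>UNIV. pxyz x y z)"
    and h2: "\<And>z. pz z = (\<Sum>y\<in>UNIV. pyz y z)"
    and h3: "\<And>y. py y = (\<Sum>z\<in>UNIV. pyz y z)"
    and h4: "\<And>y z. pyz y z \<ge> 0"
    and h5: "\<And>y z. py y = 0 \<Longrightarrow> pyz y z = 0"
    and h6: "\<And>y z. py y = 0 \<Longrightarrow> pxyz x y z = 0"
    and h7: "\<And>y z. py y > 0 \<Longrightarrow> pxyz x y z * py y = pxy x y * pyz y z"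
    and h8: "\<And>y. py y \<ge> 0"
  shows "(\<Sum>z\<in>UNIV. \<bar>pxz x z / q - px / q * (pz z / q)\<bar>)
       \<le> (\<Sum>y\<in>UNIV. \<bar>pxy x y / q - px / q * (py y / q)\<bar>)"
proof -
  define c where "c y z = pyz y z / py y" for y z
  have c1: "pxyz x y z = c y z * pxy x y" for y z
  proof (cases "py y = 0")
    case True thus ?thesis using h6 by (simp add: c_def)
  next
    case False
    hence "py y > 0" using h8[of y] by simp
    thus ?thesis using h7[of y z] by (simp add: c_def field_simps)
  qed
  have c2: "pyz y z = c y z * py y" for y z
    using h5[of y z] by (cases "py y = 0") (auto simp: c_def)
  have c3: "(\<Sum>z\<in>UNIV. c y z) \<le> 1" for y
  proof (cases "py y = 0")
    case True thus ?thesis by (simp add: c_def)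
  next
    case False
    hence "py y > 0" using h8[of y] by simp
    thus ?thesis unfolding c_def by (simp add: sum_divide_distrib[symmetric] h3[symmetric])
  qed
  have c4: "c y z \<ge> 0" for y z unfolding c_def using h4 h8 by simp
  have eq: "pxz x z / q - px / q * (pz z / q) = (\<Sum>y\<in>UNIV. c y z * (pxy x y / q - px / q * (py y / q)))" for z
  proof -
    have "pxz x z / q - px / q * (pz z / q) = (\<Sum>y\<in>UNIV. pxyz x y z) / q - px / q * ((\<Sum>y\<in>UNIV. pyz y z) / q)"
      using h1 h2 by simp
    also have "\<dots> = (\<Sum>y\<in>UNIV. c y z * (pxy x y / q - px / q * (py y / q)))"
      by (simp add: c1 c2 sum_divide_distrib sum_distrib_left sum_subtractf algebra_simps)
    finally show ?thesis .
  qed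
  have "(\<Sum>z\<in>UNIV. \<bar>pxz x z / q - px / q * (pz z / q)\<bar>)
      \<le> (\<Sum>z\<in>UNIV. \<Sum>y\<in>UNIV. c y z * \<bar>pxy x y / q - px / q * (py y / q)\<bar>)"
    unfolding eq
    by (rule sum_mono, rule order_trans[OF sum_abs]) (simp add: abs_mult c4)
  also have "\<dots> = (\<Sum>y\<in>UNIV. (\<Sum>z\<in>UNIV. c y z) * \<bar>pxy x y / q - px / q * (py y / q)\<bar>)"
    by (subst sum.swap) (simp add: sum_distrib_right)
  also have "\<dots> \<le> (\<Sum>y\<in>UNIV. \<bar>pxy x y / q - px / q * (py y / q)\<bar>)"
    by (rule sum_mono, rule mult_left_le_one_le) (simp_all add: c3 sum_nonneg c4)
  finally show ?thesis .
qed

theorem lemma18: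
  fixes p :: "'o pmf"
    and X :: "'o \<Rightarrow> 'x::finite" and Y :: "'o \<Rightarrow> 'y::finite"
    and Z :: "'o \<Rightarrow> 'z::finite" and S :: "'o \<Rightarrow> 's::finite"
  assumes "cond_indep p X Z (\<lambda>\<omega>. (Y \<omega>, S \<omega>))"
  shows "nu p X Z S \<le> real CARD('y) / real CARD('z) * nu p X Y S"
proof -
  have per: "(\<Sum>z\<in>UNIV. \<bar>cprb p (\<lambda>\<omega>. X \<omega> = x \<and> Z \<omega> = z) (\<lambda>\<omega>. S \<omega> = s)
              - cprb p (\<lambda>\<omega>. X \<omega> = x) (\<lambda>\<omega>. S \<omega> = s) * cprb p (\<lambda>\<omega>. Z \<omega> = z) (\<lambda>\<omega>. S \<omega> = s)\<bar>)
     \<le> (\<Sum>y\<in>UNIV. \<bar>cprb p (\<lambda>\<omega>. X \<omega> = x \<and> Y \<omega> = y) (\<lambda>\<omega>. S \<omega> = s)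
              - cprb p (\<lambda>\<omega>. X \<omega> = x) (\<lambda>\<omega>. S \<omega> = s) * cprb p (\<lambda>\<omega>. Y \<omega> = y) (\<lambda>\<omega>. S \<omega> = s)\<bar>)"
    if q: "prb p (\<lambda>\<omega>. S \<omega> = s) > 0" for s x
  proof -
    define pyz where "pyz y z = prb p (\<lambda>\<omega>. Y \<omega> = y \<and> Z \<omega> = z \<and> S \<omega> = s)" for y z
    define pxyz where "pxyz x y z = prb p (\<lambda>\<omega>. X \<omega> = x \<and> Y \<omega> = y \<and> Z \<omega> = z \<and> S \<omega> = s)" for x y z
    define py where "py y = prb p (\<lambda>\<omega>. Y \<omega> = y \<and> S \<omega> = s)" for y
    define pxy where "pxy x y = prb p (\<lambda>\<omega>. (X \<omega> = x \<and> Y \<omega> = y) \<and> S \<omega> = s)" for x y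
    define pxz where "pxz x z = prb p (\<lambda>\<omega>. (X \<omega> = x \<and> Z \<omega> = z) \<and> S \<omega> = s)" for x z
    define pz where "pz z = prb p (\<lambda>\<omega>. Z \<omega> = z \<and> S \<omega> = s)" for z
    define px where "px = prb p (\<lambda>\<omega>. X \<omega> = x \<and> S \<omega> = s)"
    define q where "q = prb p (\<lambda>\<omega>. S \<omega> = s)"
    have "(\<Sum>z\<in>UNIV. \<bar>pxz x z / q - px / q * (pz z / q)\<bar>)
       \<le> (\<Sum>y\<in>UNIV. \<bar>pxy x y / q - px / q * (py y / q)\<bar>)"
    proof (rule abstract_step)
      show "q > 0" using q q_def by simp
      show "pxz x z = (\<Sum>y\<in>UNIV. pxyz x y z)" for z
        unfolding pxz_def pxyz_def
        by (subst prb_sum[where Y=Y]) (rule sum.cong, simp, rule prb_cong, auto)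
      show "pz z = (\<Sum>y\<in>UNIV. pyz y z)" for z
        unfolding pz_def pyz_def
        by (subst prb_sum[where Y=Y]) (rule sum.cong, simp, rule prb_cong, auto)
      show "py y = (\<Sum>z\<in>UNIV. pyz y z)" for y
        unfolding py_def pyz_def
        by (subst prb_sum[where Y=Z]) (rule sum.cong, simp, rule prb_cong, auto)
      show "pyz y z \<ge> 0" for y z unfolding pyz_def by (rule prb_nonneg)
      show "py y \<ge> 0" for y unfolding py_def by (rule prb_nonneg)
      show "pyz y z = 0" if "py y = 0" for y z
        using prb_mono[of "\<lambda>\<omega>. Y \<omega> = y \<and> Z \<omega> = z \<and> S \<omega> = s" "\<lambda>\<omega>. Y \<omega> = y \<and> S \<omega> = s" p]
          prb_nonneg[of p "\<lambda>\<omega>. Y \<omega> = y \<and> Z \<omega> = z \<and> S \<omega> = s"] that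
        unfolding pyz_def py_def by auto
      show "pxyz x y z = 0" if "py y = 0" for y z
        using prb_mono[of "\<lambda>\<omega>. X \<omega> = x \<and> Y \<omega> = y \<and> Z \<omega> = z \<and> S \<omega> = s" "\<lambda>\<omega>. Y \<omega> = y \<and> S \<omega> = s" p]
          prb_nonneg[of p "\<lambda>\<omega>. X \<omega> = x \<and> Y \<omega> = y \<and> Z \<omega> = z \<and> S \<omega> = s"] that
        unfolding pxyz_def py_def by auto
      show "pxyz x y z * py y = pxy x y * pyz y z" if pos: "py y > 0" for y z
      proof -
        have e0: "prb p (\<lambda>\<omega>. (Y \<omega>, S \<omega>) = (y, s)) = py y"
          unfolding py_def by (rule prb_cong) auto
        have e1: "prb p (\<lambda>\<omega>. (X \<omega> = x \<and> Z \<omega> = z) \<and> (Y \<omega>, S \<omega>) = (y, s)) = pxyz x y z"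
          unfolding pxyz_def by (rule prb_cong) auto
        have e2: "prb p (\<lambda>\<omega>. X \<omega> = x \<and> (Y \<omega>, S \<omega>) = (y, s)) = pxy x y"
          unfolding pxy_def by (rule prb_cong) auto
        have e3: "prb p (\<lambda>\<omega>. Z \<omega> = z \<and> (Y \<omega>, S \<omega>) = (y, s)) = pyz y z"
          unfolding pyz_def by (rule prb_cong) auto
        have "pxyz x y z / py y = pxy x y / py y * (pyz y z / py y)"
        proof -
          have "\<forall>w x z. prb p (\<lambda>\<omega>. (Y \<omega>, S \<omega>) = w) > 0 \<longrightarrow>
            prb p (\<lambda>\<omega>. (X \<omega> = x \<and> Z \<omega> = z) \<and> (Y \<omega>, S \<omega>) = w) / prb p (\<lambda>\<omega>. (Y \<omega>, S \<omega>) = w) =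
            prb p (\<lambda>\<omega>. X \<omega> = x \<and> (Y \<omega>, S \<omega>) = w) / prb p (\<lambda>\<omega>. (Y \<omega>, S \<omega>) = w) *
            (prb p (\<lambda>\<omega>. Z \<omega> = z \<and> (Y \<omega>, S \<omega>) = w) / prb p (\<lambda>\<omega>. (Y \<omega>, S \<omega>) = w))"
            using assms unfolding cond_indep_def cprb_def .
          from spec[OF spec[OF spec[OF this, of "(y, s)"], of x], of z]
          show ?thesis using pos by (simp only: e0 e1 e2 e3)
        qed
        thus ?thesis using pos by (simp add: field_simps power2_eq_square)
      qed
    qed
    thus ?thesis unfolding cprb_def pxz_def px_def pz_def pxy_def py_def q_def .
  qed
  define cy where "cy = real CARD('y)"
  define cz where "cz = real CARD('z)"
  define cx where "cx = real CARD('x)"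
  have cy: "cy > 0" unfolding cy_def by simp
  have cz: "cz > 0" unfolding cz_def by simp
  let ?A = "\<lambda>s x z. \<bar>cprb p (\<lambda>\<omega>. X \<omega> = x \<and> Z \<omega> = z) (\<lambda>\<omega>. S \<omega> = s)
              - cprb p (\<lambda>\<omega>. X \<omega> = x) (\<lambda>\<omega>. S \<omega> = s) * cprb p (\<lambda>\<omega>. Z \<omega> = z) (\<lambda>\<omega>. S \<omega> = s)\<bar>"
  let ?B = "\<lambda>s x y. \<bar>cprb p (\<lambda>\<omega>. X \<omega> = x \<and> Y \<omega> = y) (\<lambda>\<omega>. S \<omega> = s)
              - cprb p (\<lambda>\<omega>. X \<omega> = x) (\<lambda>\<omega>. S \<omega> = s) * cprb p (\<lambda>\<omega>. Y \<omega> = y) (\<lambda>\<omega>. S \<omega> = s)\<bar>"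
  have step: "prb p (\<lambda>\<omega>. S \<omega> = s) * (\<Sum>x\<in>UNIV. 1 / cx * (\<Sum>z\<in>UNIV. 1 / cz * ?A s x z))
      \<le> cy / cz * (prb p (\<lambda>\<omega>. S \<omega> = s) * (\<Sum>x\<in>UNIV. 1 / cx * (\<Sum>y\<in>UNIV. 1 / cy * ?B s x y)))"
    if s: "s \<in> {s. prb p (\<lambda>\<omega>. S \<omega> = s) > 0}" for s
  proof -
    have "(\<Sum>x\<in>UNIV. 1 / cx * (\<Sum>z\<in>UNIV. 1 / cz * ?A s x z))
        \<le> (\<Sum>x\<in>UNIV. cy / cz * (1 / cx * (\<Sum>y\<in>UNIV. 1 / cy * ?B s x y)))"
    proof (rule sum_mono)
      fix x
      have "(\<Sum>z\<in>UNIV. ?A s x z) \<le> (\<Sum>y\<in>UNIV. ?B s x y)" using per[of s x] s by simp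
      hence "1 / cx * (1 / cz * (\<Sum>z\<in>UNIV. ?A s x z)) \<le> 1 / cx * (1 / cz * (\<Sum>y\<in>UNIV. ?B s x y))"
        using cz by (simp add: cx_def divide_right_mono)
      show "1 / cx * (\<Sum>z\<in>UNIV. 1 / cz * ?A s x z)
        \<le> cy / cz * (1 / cx * (\<Sum>y\<in>UNIV. 1 / cy * ?B s x y))"
      proof -
        have a: "(\<Sum>z\<in>UNIV. 1 / cz * ?A s x z) = 1 / cz * (\<Sum>z\<in>UNIV. ?A s x z)"
          by (simp add: sum_distrib_left)
        have b: "cy / cz * (1 / cx * (\<Sum>y\<in>UNIV. 1 / cy * ?B s x y)) = 1 / cx * (1 / cz * (\<Sum>y\<in>UNIV. ?B s x y))"
          using cy by (simp add: sum_divide_distrib[symmetric] mult.commute)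
        show ?thesis unfolding a b using \<open>1 / cx * (1 / cz * (\<Sum>z\<in>UNIV. ?A s x z)) \<le> _\<close> .
      qed
    qed
    hence "prb p (\<lambda>\<omega>. S \<omega> = s) * (\<Sum>x\<in>UNIV. 1 / cx * (\<Sum>z\<in>UNIV. 1 / cz * ?A s x z))
        \<le> prb p (\<lambda>\<omega>. S \<omega> = s) * (\<Sum>x\<in>UNIV. cy / cz * (1 / cx * (\<Sum>y\<in>UNIV. 1 / cy * ?B s x y)))"
      by (rule mult_left_mono) (rule prb_nonneg)
    moreover have "prb p (\<lambda>\<omega>. S \<omega> = s) * (\<Sum>x\<in>UNIV. cy / cz * (1 / cx * (\<Sum>y\<in>UNIV. 1 / cy * ?B s x y)))
       = cy / cz * (prb p (\<lambda>\<omega>. S \<omega> = s) * (\<Sum>x\<in>UNIV. 1 / cx * (\<Sum>y\<in>UNIV. 1 / cy * ?B s x y)))"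
      by (simp only: sum_distrib_left[symmetric] mult.left_commute)
    ultimately show ?thesis by simp
  qed
  show ?thesis
    unfolding nu_def cy_def[symmetric] cz_def[symmetric] cx_def[symmetric]
    by (subst sum_distrib_left) (rule sum_mono, rule step)
qed

end
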